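(* Let $\Gamma$ and the data $s_0,\eta_0,\Xi$ be as in the context. There is a constant $c>0$ depending only on this data such that for every cusp $\gamma\xi\infty\in\mathbb R^{n-1}$ ($\gamma\in\Gamma$, $\xi\in\Xi$, $\gamma\xi\notin P$), $h(\gamma\xi\infty)\ge c$.
   Context: $n\ge2$, $G=\mathrm{SO}(n,1)$, $K\cong\mathrm{SO}(n)$ maximal compact. $A=\{a(t)\}$ a one-parameter $\mathbb R$-split torus with $\mathfrak g=\mathfrak g_{-1}\oplus\mathfrak z(A)\oplus\mathfrak g_{+1}$, $\mathrm{Ad}(a(t))=e^{\pm t}$ on $\mathfrak g_{\pm1}$; $M=Z_G(A)\cap K$, $N=\exp\mathfrak g_{+1}$, $\mathfrak g_{+1}\cong\mathbb R^{n-1}$, $u(\mathbf x)=\exp\mathbf x$; $\sigma\in K$ with $\sigma^2=e$, $\sigma a(t)\sigma^{-1}=a(-t)$; $P=MAN$. Each $g\in G\setminus P$ is $g=u(\mathbf x)\sigma ma(r)u(\mathbf y)$ with $\mathbf x,r$ unique; $\partial\mathbb H^n\cong\mathbb R^{n-1}\cup\{\infty\}$ via $u(\mathbf x)\sigma P\mapsto\mathbf x$, $P\mapsto\infty$. $\Omega(\eta,s)=\eta\{a(t):t\ge s\}K$. $\Gamma$ discrete, finite covolume, $\Gamma\backslash\mathbb H^n$ non-compact, with fixed $s_0>0$, compact $\eta_0\subset N$, finite $\Xi\ni e$ satisfying: (i) $G=\Gamma\Xi\Omega(\eta_0,s_0)$; (ii) $\Gamma\cap\xi N\xi^{-1}$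 cocompact in $\xi N\xi^{-1}$; (iii) for compact $\eta$, $\{\gamma:\gamma\Xi\Omega(\eta,s_0)\cap\Omega(\eta,s_0)\ne\emptyset\}$ finite; (iv) for compact $\eta\supseteq\eta_0$ some $s_1>s_0$ with $\gamma\xi_1\Omega(\eta,s_0)\cap\xi_2\Omega(\eta,s_1)\ne\emptyset\Rightarrow\xi_1=\xi_2,\gamma\in\xi_1NM\xi_1^{-1}$. Height: for $\gamma\xi=u(\mathbf x_1)\sigma ma(r)u(\mathbf y)$, $\gamma\xi\infty=\mathbf x_1$ and $h(\gamma\xi\infty)=e^r$. *)

theory Defs
  imports "HOL-Analysis.Analysis"
begin

(* Model: R^{n+1} = (real^'n) \<times> real, with CARD('n) = n; linear maps = bounded
   linear functions (all linear maps are bounded in finite dimension). *)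

type_synonym 'n lvec = "(real^'n) \<times> real"
type_synonym 'n lmap = "'n lvec \<Rightarrow>\<^sub>L 'n lvec"

definition lorentz_form :: "'n::finite lvec \<Rightarrow> 'n lvec \<Rightarrow> real" where
  "lorentz_form v w = fst v \<bullet> fst w - snd v * snd w"

definition O_n1 :: "'n::finite lmap set" where
  "O_n1 = {g. \<forall>v w. lorentz_form (blinfun_apply g v) (blinfun_apply g w) = lorentz_form v w}"

definition G_SOn1 :: "'n::finite lmap set" where
  "G_SOn1 = connected_component_set O_n1 id_blinfun"

definition so_n1 :: "'n::finite lmap set" where
  "so_n1 = {X. \<forall>v w. lorentz_form (blinfun_apply X v) w + lorentz_form v (blinfun_apply X w) = 0}"

fun bpow :: "'n::finite lmap \<Rightarrow> nat \<Rightarrow> 'n lmap" where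
  "bpow X 0 = id_blinfun"
| "bpow X (Suc k) = X o\<^sub>L bpow X k"

definition mexp :: "'n::finite lmap \<Rightarrow> 'n lmap" where
  "mexp X = (\<Sum>k. (1 / fact k) *\<^sub>R bpow X k)"

definition subgroup_of :: "'n::finite lmap set \<Rightarrow> 'n lmap set \<Rightarrow> bool" where
  "subgroup_of H Grp \<longleftrightarrow> H \<subseteq> Grp \<and> id_blinfun \<in> H \<and>
     (\<forall>x\<in>H. \<forall>y\<in>H. x o\<^sub>L y \<in> H) \<and>
     (\<forall>x\<in>H. \<exists>y\<in>H. x o\<^sub>L y = id_blinfun \<and> y o\<^sub>L x = id_blinfun)"

definition max_compact_subgroup :: "'n::finite lmap set \<Rightarrow> bool" where
  "max_compact_subgroup K \<longleftrightarrow> subgroup_of K G_SOn1 \<and> compact K \<and>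
     (\<forall>K'. subgroup_of K' G_SOn1 \<and> compact K' \<and> K \<subseteq> K' \<longrightarrow> K' = K)"

text \<open>Eigenspace of Ad(a(t)) with eigenvalue e^{lam t}:
  g_{+1} = ad_eig a 1, g_{-1} = ad_eig a (-1), z(A) = ad_eig a 0.\<close>
definition ad_eig :: "(real \<Rightarrow> 'n::finite lmap) \<Rightarrow> real \<Rightarrow> 'n lmap set" where
  "ad_eig a lam = {X \<in> so_n1. \<forall>t. a t o\<^sub>L X o\<^sub>L a (-t) = exp (lam * t) *\<^sub>R X}"

definition split_torus :: "(real \<Rightarrow> 'n::finite lmap) \<Rightarrow> bool" where
  "split_torus a \<longleftrightarrow> continuous_on UNIV a \<and> inj a \<and> (\<forall>t. a t \<in> G_SOn1) \<and>
     a 0 = id_blinfun \<and> (\<forall>s t. a (s + t) = a s o\<^sub>L a t) \<and>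
     (\<forall>X\<in>so_n1. \<exists>Y\<in>ad_eig a (-1). \<exists>Z\<in>ad_eig a 0. \<exists>W\<in>ad_eig a 1. X = Y + Z + W)"

definition M_grp :: "(real \<Rightarrow> 'n::finite lmap) \<Rightarrow> 'n lmap set \<Rightarrow> 'n lmap set" where
  "M_grp a K = {g \<in> G_SOn1. \<forall>t. g o\<^sub>L a t = a t o\<^sub>L g} \<inter> K"

definition N_grp :: "(real \<Rightarrow> 'n::finite lmap) \<Rightarrow> 'n lmap set" where
  "N_grp a = mexp ` ad_eig a 1"

definition P_grp :: "(real \<Rightarrow> 'n::finite lmap) \<Rightarrow> 'n lmap set \<Rightarrow> 'n lmap set" where
  "P_grp a K = {m o\<^sub>L a t o\<^sub>L u | m t u. m \<in> M_grp a K \<and> u \<in> N_grp a}"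

definition Omega :: "(real \<Rightarrow> 'n::finite lmap) \<Rightarrow> 'n lmap set \<Rightarrow> 'n lmap set \<Rightarrow> real \<Rightarrow> 'n lmap set" where
  "Omega a K eta s = {u o\<^sub>L a t o\<^sub>L k | u t k. u \<in> eta \<and> s \<le> t \<and> k \<in> K}"

definition setmul :: "'n::finite lmap set \<Rightarrow> 'n lmap set \<Rightarrow> 'n lmap set" where
  "setmul A B = {x o\<^sub>L y | x y. x \<in> A \<and> y \<in> B}"

text \<open>xi H xi^{-1}, written without inverses.\<close>
definition conj_set :: "'n::finite lmap \<Rightarrow> 'n lmap set \<Rightarrow> 'n lmap set" where
  "conj_set xi H = {h. \<exists>u\<in>H. h o\<^sub>L xi = xi o\<^sub>L u}"

definition discrete_set :: "'n::finite lmap set \<Rightarrow> bool" where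
  "discrete_set S \<longleftrightarrow> (\<forall>x\<in>S. \<exists>e>0. \<forall>y\<in>S. dist y x < e \<longrightarrow> y = x)"

text \<open>Hyperboloid model of H^n: point of the upper sheet over x \<in> R^n.
  The G-invariant volume in these coordinates is dx / sqrt(1+|x|^2).\<close>
definition hyp :: "real^'n::finite \<Rightarrow> 'n lvec" where
  "hyp x = (x, sqrt (1 + (norm x)\<^sup>2))"

definition finite_covolume :: "'n::finite lmap set \<Rightarrow> bool" where
  "finite_covolume Gam \<longleftrightarrow> (\<exists>F \<in> sets lborel.
     (\<integral>\<^sup>+ x. indicator F x * ennreal (1 / sqrt (1 + (norm x)\<^sup>2)) \<partial>(lborel :: (real^'n) measure)) < \<infinity> \<and>
     (\<forall>x. \<exists>g\<in>Gam. \<exists>y\<in>F. blinfun_apply g (hyp y) = hyp x))"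

definition compact_quotient :: "'n::finite lmap set \<Rightarrow> bool" where
  "compact_quotient Gam \<longleftrightarrow> (\<exists>C :: (real^'n) set. compact C \<and>
     (\<forall>x. \<exists>g\<in>Gam. \<exists>y\<in>C. blinfun_apply g (hyp y) = hyp x))"

definition cocompact_in :: "'n::finite lmap set \<Rightarrow> 'n lmap set \<Rightarrow> bool" where
  "cocompact_in H L \<longleftrightarrow> (\<exists>C. compact C \<and> C \<subseteq> L \<and> (\<forall>h\<in>L. \<exists>g\<in>H. \<exists>c\<in>C. h = g o\<^sub>L c))"

end

theory Submission
  imports Defs
begin


typedef (overloaded) 'n endo = "UNIV :: ('n::finite lvec \<Rightarrow>\<^sub>L 'n lvec) set"
  morphisms rep_endo Endo by simp

setup_lifting type_definition_endo

instantiation endo :: (finite) real_normed_algebra_1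
begin
lift_definition zero_endo :: "'a endo" is 0 .
lift_definition one_endo :: "'a endo" is id_blinfun .
lift_definition plus_endo :: "'a endo \<Rightarrow> 'a endo \<Rightarrow> 'a endo" is "(+)" .
lift_definition minus_endo :: "'a endo \<Rightarrow> 'a endo \<Rightarrow> 'a endo" is "(-)" .
lift_definition uminus_endo :: "'a endo \<Rightarrow> 'a endo" is uminus .
lift_definition times_endo :: "'a endo \<Rightarrow> 'a endo \<Rightarrow> 'a endo" is "(o\<^sub>L)" .
lift_definition scaleR_endo :: "real \<Rightarrow> 'a endo \<Rightarrow> 'a endo" is "scaleR" .
lift_definition norm_endo :: "'a endo \<Rightarrow> real" is norm .
definition dist_endo :: "'a endo \<Rightarrow> 'a endo \<Rightarrow> real" where "dist_endo x y = norm (x - y)"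
definition sgn_endo :: "'a endo \<Rightarrow> 'a endo" where "sgn_endo x = scaleR (inverse (norm x)) x"
definition uniformity_endo :: "('a endo \<times> 'a endo) filter" where
  "uniformity_endo = (INF e\<in>{0 <..}. principal {(x, y). dist x y < e})"
definition open_endo :: "'a endo set \<Rightarrow> bool" where
  "open_endo S = (\<forall>x\<in>S. \<forall>\<^sub>F (x', y) in uniformity. x' = x \<longrightarrow> y \<in> S)"
instance
proof
  fix x y z :: "'a endo" and a b :: real
  show "x + y + z = x + (y + z)" by transfer (simp add: algebra_simps)
  show "x + y = y + x" by transfer (simp add: algebra_simps)
  show "0 + x = x" by transfer simp
  show "- x + x = 0" by transfer simp
  show "x - y = x + - y" by transfer simp
  show "a *\<^sub>R (x + y) = a *\<^sub>R x + a *\<^sub>R y" by transfer (simp add: algebra_simps)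
  show "(a + b) *\<^sub>R x = a *\<^sub>R x + b *\<^sub>R x" by transfer (simp add: algebra_simps)
  show "a *\<^sub>R b *\<^sub>R x = (a * b) *\<^sub>R x" by transfer simp
  show "1 *\<^sub>R x = x" by transfer simp
  show "x * y * z = x * (y * z)" by transfer (rule blinfun_eqI, simp)
  show "1 * x = x" by transfer (rule blinfun_eqI, simp)
  show "x * 1 = x" by transfer (rule blinfun_eqI, simp)
  show "(x + y) * z = x * z + y * z" by transfer (simp add: blinfun.bilinear_simps bounded_bilinear.add_left[OF bounded_bilinear_blinfun_compose])
  show "x * (y + z) = x * y + x * z" by transfer (simp add: bounded_bilinear.add_right[OF bounded_bilinear_blinfun_compose])
  show "(0::'a endo) \<noteq> 1"
  proof transfer
    show "(0::'a lvec \<Rightarrow>\<^sub>L 'a lvec) \<noteq> id_blinfun"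
    proof
      assume "(0::'a lvec \<Rightarrow>\<^sub>L 'a lvec) = id_blinfun"
      then have "blinfun_apply (0::'a lvec \<Rightarrow>\<^sub>L 'a lvec) (0,1) = blinfun_apply id_blinfun (0,1)" by simp
      then show False by (simp add: zero_prod_def)
    qed
  qed
  show "a *\<^sub>R x * y = a *\<^sub>R (x * y)" by transfer (simp add: bounded_bilinear.scaleR_left[OF bounded_bilinear_blinfun_compose])
  show "x * a *\<^sub>R y = a *\<^sub>R (x * y)" by transfer (simp add: bounded_bilinear.scaleR_right[OF bounded_bilinear_blinfun_compose])
  show "norm (1::'a endo) = 1" by transfer simp
  show "norm (x * y) \<le> norm x * norm y" by transfer (rule norm_blinfun_compose)
  show "dist x y = norm (x - y)" by (simp add: dist_endo_def)
  show "sgn x = inverse (norm x) *\<^sub>R x" by (simp add: sgn_endo_def)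
  show "(uniformity :: ('a endo \<times> 'a endo) filter) = (INF e\<in>{0 <..}. principal {(x, y). dist x y < e})" by (simp add: uniformity_endo_def)
  fix U :: "'a endo set"
  show "open U = (\<forall>x\<in>U. \<forall>\<^sub>F (x', y) in uniformity. x' = x \<longrightarrow> y \<in> U)" by (simp add: open_endo_def)
  show "(norm x = 0) = (x = 0)" by transfer simp
  show "norm (x + y) \<le> norm x + norm y" by transfer (rule norm_triangle_ineq)
  show "norm (a *\<^sub>R x) = \<bar>a\<bar> * norm x" by transfer simp
qed
end

lemma dist_endo_rep: "dist x y = dist (rep_endo x) (rep_endo y)"
  by (simp add: dist_endo_def dist_norm norm_endo.rep_eq minus_endo.rep_eq)

instance endo :: (finite) banach
proof
  fix X :: "nat \<Rightarrow> 'a endo"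
  assume "Cauchy X"
  then have "Cauchy (\<lambda>n. rep_endo (X n))" unfolding Cauchy_def dist_endo_rep .
  then obtain L where "(\<lambda>n. rep_endo (X n)) \<longlonglongrightarrow> L" using Cauchy_convergent_iff convergent_def by blast
  then have "X \<longlonglongrightarrow> Endo L" unfolding LIMSEQ_def dist_endo_rep by (simp add: Endo_inverse)
  then show "convergent X" by (rule convergentI)
qed

lemma rep_endo_power: "rep_endo (Endo X ^ n) = bpow X n"
  by (induction n) (simp_all add: one_endo.rep_eq times_endo.rep_eq Endo_inverse)

lemma bl_rep_endo: "bounded_linear (rep_endo :: 'n::finite endo \<Rightarrow> _)"
  by (rule bounded_linear_intro[where K=1]) (simp_all add: plus_endo.rep_eq scaleR_endo.rep_eq norm_endo.rep_eq)

lemma mexp_exp: "mexp X = rep_endo (exp (Endo X))"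
proof -
  have "rep_endo (exp (Endo X)) = (\<Sum>n. rep_endo (Endo X ^ n /\<^sub>R fact n))"
    unfolding exp_def
    by (rule bounded_linear.suminf[OF bl_rep_endo summable_exp_generic])
  also have "\<dots> = mexp X"
    unfolding mexp_def by (simp add: scaleR_endo.rep_eq rep_endo_power divide_inverse_commute)
  finally show ?thesis by simp
qed

lemma exp_rep: "exp (Endo X) = Endo (mexp X)"
  by (simp add: mexp_exp rep_endo_inverse)

lemma mexp_add_commuting:
  assumes "X o\<^sub>L Y = Y o\<^sub>L X"
  shows "mexp (X + Y) = mexp X o\<^sub>L mexp Y"
proof -
  have "Endo X * Endo Y = Endo Y * Endo X"
    using assms by (simp add: times_endo_def Endo_inverse)
  then have "exp (Endo X + Endo Y) = exp (Endo X) * exp (Endo Y)" by (rule exp_add_commuting)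
  then show ?thesis
    by (simp add: mexp_exp plus_endo_def times_endo.rep_eq Endo_inverse)
qed

lemma mexp_zero: "mexp 0 = id_blinfun"
proof -
  have "mexp 0 = rep_endo (exp 0)" by (simp add: mexp_exp zero_endo_def)
  then show ?thesis by (simp add: one_endo.rep_eq)
qed

lemma mexp_conj:
  fixes y m X :: "'n::finite lmap"
  assumes "m o\<^sub>L y = id_blinfun" and ym0: "y o\<^sub>L m = id_blinfun"
  shows "y o\<^sub>L mexp X o\<^sub>L m = mexp (y o\<^sub>L X o\<^sub>L m)"
proof -
  let ?y = "Endo y" and ?m = "Endo m" and ?X = "Endo X"
  have ym: "?y * ?m = 1" using ym0 by (simp add: times_endo_def one_endo_def Endo_inverse)
  have my: "?m * ?y = 1" using assms by (simp add: times_endo_def one_endo_def Endo_inverse)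
  have pw: "(?y * ?X * ?m) ^ n = (if n = 0 then 1 else ?y * ?X ^ n * ?m)" for n
  proof (induction n)
    case (Suc n) then show ?case
      by (cases n) (simp_all add: mult.assoc, metis my mult.assoc mult_1_left power_Suc)
  qed simp
  have bl: "bounded_linear (\<lambda>Z. ?y * Z * ?m)"
    by (intro bounded_linear_intros)
  have "?y * exp ?X * ?m = (\<Sum>n. ?y * (?X ^ n /\<^sub>R fact n) * ?m)"
    unfolding exp_def using bounded_linear.suminf[OF bl summable_exp_generic] by simp
  also have "\<dots> = (\<Sum>n. (?y * ?X * ?m) ^ n /\<^sub>R fact n)"
  proof (rule suminf_cong)
    fix n show "?y * (?X ^ n /\<^sub>R fact n) * ?m = (?y * ?X * ?m) ^ n /\<^sub>R fact n"
      by (cases "n = 0") (simp_all add: pw my ym)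
  qed
  also have "\<dots> = exp (?y * ?X * ?m)" by (simp add: exp_def)
  finally have "?y * exp ?X * ?m = exp (?y * ?X * ?m)" .
  then show ?thesis
    by (simp add: exp_rep times_endo_def Endo_inverse Endo_inject)
qed



lemma comp_assoc[simp]: "(A o\<^sub>L B) o\<^sub>L C = A o\<^sub>L (B o\<^sub>L C)"
  by (rule blinfun_eqI) simp
lemma comp_id_left[simp]: "id_blinfun o\<^sub>L A = A"
  by (rule blinfun_eqI) simp
lemma comp_id_right[simp]: "A o\<^sub>L id_blinfun = A"
  by (rule blinfun_eqI) simp

lemmas cbb = bounded_bilinear_blinfun_compose
lemma comp_scaleR_left[simp]: "(r *\<^sub>R A) o\<^sub>L B = r *\<^sub>R (A o\<^sub>L B)"
  by (rule bounded_bilinear.scaleR_left[OF cbb])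
lemma comp_scaleR_right[simp]: "A o\<^sub>L (r *\<^sub>R B) = r *\<^sub>R (A o\<^sub>L B)"
  by (rule bounded_bilinear.scaleR_right[OF cbb])
lemma comp_add_left: "(A + B) o\<^sub>L C = (A o\<^sub>L C) + (B o\<^sub>L C)"
  by (rule bounded_bilinear.add_left[OF cbb])
lemma comp_add_right: "C o\<^sub>L (A + B) = (C o\<^sub>L A) + (C o\<^sub>L B)"
  by (rule bounded_bilinear.add_right[OF cbb])
lemma comp_diff_left: "(A - B) o\<^sub>L C = (A o\<^sub>L C) - (B o\<^sub>L C)"
  by (rule bounded_bilinear.diff_left[OF cbb])
lemma comp_diff_right: "C o\<^sub>L (A - B) = (C o\<^sub>L A) - (C o\<^sub>L B)"
  by (rule bounded_bilinear.diff_right[OF cbb])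
lemma comp_minus_left: "(- A) o\<^sub>L C = - (A o\<^sub>L C)"
  by (rule bounded_bilinear.minus_left[OF cbb])
lemma comp_minus_right: "C o\<^sub>L (- A) = - (C o\<^sub>L A)"
  by (rule bounded_bilinear.minus_right[OF cbb])

lemma lf_add_left: "lorentz_form (u + v) w = lorentz_form u w + lorentz_form v w"
  by (simp add: lorentz_form_def inner_add_left algebra_simps)
lemma lf_add_right: "lorentz_form w (u + v) = lorentz_form w u + lorentz_form w v"
  by (simp add: lorentz_form_def inner_add_right algebra_simps)
lemma lf_diff_left: "lorentz_form (u - v) w = lorentz_form u w - lorentz_form v w"
  by (simp add: lorentz_form_def inner_diff_left algebra_simps)
lemma lf_diff_right: "lorentz_form w (u - v) = lorentz_form w u - lorentz_form w v"
  by (simp add: lorentz_form_def inner_diff_right algebra_simps)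
lemma lf_minus_left: "lorentz_form (- u) w = - lorentz_form u w"
  by (simp add: lorentz_form_def)
lemma lf_minus_right: "lorentz_form w (- u) = - lorentz_form w u"
  by (simp add: lorentz_form_def)

lemma so_D: "X \<in> so_n1 \<Longrightarrow> lorentz_form (blinfun_apply X v) w + lorentz_form v (blinfun_apply X w) = 0"
  unfolding so_n1_def by blast
lemma so_I: "(\<And>v w. lorentz_form (blinfun_apply X v) w + lorentz_form v (blinfun_apply X w) = 0) \<Longrightarrow> X \<in> so_n1"
  unfolding so_n1_def by blast

lemma so_skew: "X \<in> so_n1 \<Longrightarrow> lorentz_form (blinfun_apply X v) w = - lorentz_form v (blinfun_apply X w)"
  using so_D[of X v w] by linarith

lemma so_minus: "X \<in> so_n1 \<Longrightarrow> - X \<in> so_n1"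
  by (rule so_I) (simp add: blinfun.minus_left lf_minus_left lf_minus_right so_skew)

lemma so_add: "X \<in> so_n1 \<Longrightarrow> Y \<in> so_n1 \<Longrightarrow> X + Y \<in> so_n1"
  by (rule so_I) (simp add: blinfun.add_left lf_add_left lf_add_right so_skew)

lemma so_comm: "X \<in> so_n1 \<Longrightarrow> Y \<in> so_n1 \<Longrightarrow> (X o\<^sub>L Y) - (Y o\<^sub>L X) \<in> so_n1"
proof -
  assume X: "X \<in> so_n1" and Y: "Y \<in> so_n1"
  show ?thesis
  proof (rule so_I)
    fix v w
    have e1: "blinfun_apply ((X o\<^sub>L Y) - (Y o\<^sub>L X)) z = blinfun_apply X (blinfun_apply Y z) - blinfun_apply Y (blinfun_apply X z)" for z
      by (simp add: minus_blinfun.rep_eq)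
    have a1: "lorentz_form (blinfun_apply X (blinfun_apply Y v)) w = lorentz_form v (blinfun_apply Y (blinfun_apply X w))"
      using so_skew[OF X, of "blinfun_apply Y v" w] so_skew[OF Y, of v "blinfun_apply X w"] by simp
    have a2: "lorentz_form (blinfun_apply Y (blinfun_apply X v)) w = lorentz_form v (blinfun_apply X (blinfun_apply Y w))"
      using so_skew[OF Y, of "blinfun_apply X v" w] so_skew[OF X, of v "blinfun_apply Y w"] by simp
    show "lorentz_form (blinfun_apply ((X o\<^sub>L Y) - (Y o\<^sub>L X)) v) w + lorentz_form v (blinfun_apply ((X o\<^sub>L Y) - (Y o\<^sub>L X)) w) = 0"
      unfolding e1 lf_diff_left lf_diff_right a1 a2 by simp
  qed
qed

lemma O_D: "g \<in> O_n1 \<Longrightarrow> lorentz_form (blinfun_apply g v) (blinfun_apply g w) = lorentz_form v w"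
  unfolding O_n1_def by blast

lemma so_conj:
  assumes X: "X \<in> so_n1" and y: "y \<in> O_n1" and m: "m \<in> O_n1" and my: "m o\<^sub>L y = id_blinfun"
  shows "y o\<^sub>L X o\<^sub>L m \<in> so_n1"
proof (rule so_I)
  fix v w
  have myv: "blinfun_apply m (blinfun_apply y z) = z" for z
    using arg_cong[OF my, of "\<lambda>f. blinfun_apply f z"] by simp
  have m': "lorentz_form (blinfun_apply m p) (blinfun_apply m q) = lorentz_form p q" for p q
    using O_D[OF m] .
  have "lorentz_form (blinfun_apply (y o\<^sub>L X o\<^sub>L m) v) w
      = lorentz_form (blinfun_apply X (blinfun_apply m v)) (blinfun_apply m w)"
    using m'[of "blinfun_apply y (blinfun_apply X (blinfun_apply m v))" w] by (simp add: myv)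
  moreover have "lorentz_form v (blinfun_apply (y o\<^sub>L X o\<^sub>L m) w)
      = lorentz_form (blinfun_apply m v) (blinfun_apply X (blinfun_apply m w))"
    using m'[of v "blinfun_apply y (blinfun_apply X (blinfun_apply m w))"] by (simp add: myv)
  ultimately show "lorentz_form (blinfun_apply (y o\<^sub>L X o\<^sub>L m) v) w + lorentz_form v (blinfun_apply (y o\<^sub>L X o\<^sub>L m) w) = 0"
    using so_D[OF X] by simp
qed

lemma O_inj: "g \<in> O_n1 \<Longrightarrow> inj (blinfun_apply g)"
proof (rule injI)
  fix x y assume g: "g \<in> O_n1" and e: "blinfun_apply g x = blinfun_apply g y"
  let ?d = "x - y"
  have "blinfun_apply g ?d = 0" using e by (simp add: blinfun.diff_right)
  then have "lorentz_form ?d w = 0" for w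
    using O_D[OF g, of ?d w] by (simp add: lorentz_form_def zero_prod_def)
  then have "lorentz_form ?d (fst ?d, - snd ?d) = 0" by blast
  then have "fst ?d \<bullet> fst ?d + snd ?d * snd ?d = 0" unfolding lorentz_form_def by (simp add: algebra_simps)
  then have "fst ?d = 0 \<and> snd ?d = 0"
    by (metis add_nonneg_eq_0_iff inner_eq_zero_iff inner_ge_zero mult_eq_0_iff zero_le_square)
  then show "x = y" by (simp add: prod_eq_iff)
qed

lemma O_left_inv:
  fixes g :: "'n::finite lmap"
  assumes "g \<in> O_n1" shows "\<exists>L. L o\<^sub>L g = id_blinfun"
proof -
  have "linear (blinfun_apply g)" using blinfun.bounded_linear_right bounded_linear.linear by blast
  from linear_injective_left_inverse[OF this O_inj[OF assms]]
  obtain h where h: "linear h" "h \<circ> blinfun_apply g = id" by blast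
  then have bh: "bounded_linear h" using linear_conv_bounded_linear by blast
  show ?thesis
  proof (intro exI blinfun_eqI)
    fix i show "blinfun_apply (Blinfun h o\<^sub>L g) i = blinfun_apply id_blinfun i"
      using h(2) by (simp add: bounded_linear_Blinfun_apply[OF bh]) (metis comp_apply id_apply)
  qed
qed



lemma eigD: "X \<in> ad_eig a lam \<Longrightarrow> a t o\<^sub>L (X o\<^sub>L a (-t)) = exp (lam * t) *\<^sub>R X"
  unfolding ad_eig_def by auto
lemma eig_so: "X \<in> ad_eig a lam \<Longrightarrow> X \<in> so_n1"
  unfolding ad_eig_def by auto
lemma eigI: "X \<in> so_n1 \<Longrightarrow> (\<And>t. a t o\<^sub>L (X o\<^sub>L a (-t)) = exp (lam * t) *\<^sub>R X) \<Longrightarrow> X \<in> ad_eig a lam"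
  unfolding ad_eig_def by auto

lemma st_D:
  assumes "split_torus a"
  shows "a 0 = id_blinfun" "a (s + t) = a s o\<^sub>L a t" "a t \<in> G_SOn1"
    "\<forall>X\<in>so_n1. \<exists>Y\<in>ad_eig a (-1). \<exists>Z\<in>ad_eig a 0. \<exists>W\<in>ad_eig a 1. X = Y + Z + W"
  using assms[unfolded split_torus_def] by blast+

lemma torus_inv:
  assumes "split_torus a"
  shows "a s o\<^sub>L a (-s) = id_blinfun" "a (-s) o\<^sub>L a s = id_blinfun"
proof -
  show "a s o\<^sub>L a (-s) = id_blinfun" using st_D(2)[OF assms, of s "-s"] st_D(1)[OF assms] by simp
  show "a (-s) o\<^sub>L a s = id_blinfun" using st_D(2)[OF assms, of "-s" s] st_D(1)[OF assms] by simp
qed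

lemma torus_inv2:
  assumes "split_torus a"
  shows "a (-s) o\<^sub>L (a s o\<^sub>L Z) = Z" "a s o\<^sub>L (a (-s) o\<^sub>L Z) = Z"
  using torus_inv[OF assms, of s] by (simp_all flip: comp_assoc)

lemma eig_minus: "X \<in> ad_eig a lam \<Longrightarrow> - X \<in> ad_eig a lam"
  by (rule eigI) (auto simp: so_minus eig_so comp_minus_left comp_minus_right eigD)

lemma eig_add: "X \<in> ad_eig a lam \<Longrightarrow> Y \<in> ad_eig a lam \<Longrightarrow> X + Y \<in> ad_eig a lam"
  by (rule eigI) (auto simp: so_add eig_so comp_add_left comp_add_right eigD scaleR_add_right)

lemma g1_comm:
  assumes tor: "split_torus a" and X: "X \<in> ad_eig a 1" and Y: "Y \<in> ad_eig a 1"
  shows "X o\<^sub>L Y = Y o\<^sub>L X"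
proof -
  define V where "V = (X o\<^sub>L Y) - (Y o\<^sub>L X)"
  have Vso: "V \<in> so_n1" unfolding V_def by (rule so_comm[OF eig_so[OF X] eig_so[OF Y]])
  have cXY: "a t o\<^sub>L ((P o\<^sub>L Q) o\<^sub>L a (-t)) = (a t o\<^sub>L (P o\<^sub>L a (-t))) o\<^sub>L (a t o\<^sub>L (Q o\<^sub>L a (-t)))" for t P Q
    by (simp add: torus_inv2[OF tor])
  have Vc: "a t o\<^sub>L (V o\<^sub>L a (-t)) = (exp t * exp t) *\<^sub>R V" for t
    unfolding V_def comp_diff_left comp_diff_right
    by (simp only: cXY eigD[OF X] eigD[OF Y]) (simp add: scaleR_diff_right)
  obtain A B C where A: "A \<in> ad_eig a (-1)" and B: "B \<in> ad_eig a 0" and C: "C \<in> ad_eig a 1"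
    and VABC: "V = A + B + C"
  proof -
    from st_D(4)[OF tor] Vso obtain A B C where "A\<in>ad_eig a (-1)" "B\<in>ad_eig a 0" "C\<in>ad_eig a 1" "V = A + B + C"
      by blast
    then show ?thesis using that by blast
  qed
  define S where "S = norm A + norm B + norm C"
  have S0: "S \<ge> 0" unfolding S_def by simp
  have bound: "norm V \<le> exp (-t) * S" if t: "t \<ge> 0" for t
  proof -
    have "(exp t * exp t) *\<^sub>R V = exp (-t) *\<^sub>R A + B + exp t *\<^sub>R C"
      using Vc[of t] unfolding VABC comp_add_left comp_add_right
      by (simp add: eigD[OF A] eigD[OF B] eigD[OF C])
    then have Vform: "V = (exp (-t) / (exp t * exp t)) *\<^sub>R A + (1 / (exp t * exp t)) *\<^sub>R B + (exp t / (exp t * exp t)) *\<^sub>R C"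
    proof -
      assume h: "(exp t * exp t) *\<^sub>R V = exp (-t) *\<^sub>R A + B + exp t *\<^sub>R C"
      have "V = (1 / (exp t * exp t)) *\<^sub>R ((exp t * exp t) *\<^sub>R V)" by simp
      also have "\<dots> = (1 / (exp t * exp t)) *\<^sub>R (exp (-t) *\<^sub>R A + B + exp t *\<^sub>R C)" by (simp only: h)
      finally show ?thesis by (simp add: scaleR_add_right)
    qed
    define p where "p = exp (-t) / (exp t * exp t)"
    define q where "q = 1 / (exp t * exp t)"
    define r where "r = exp t / (exp t * exp t)"
    have Veq: "V = p *\<^sub>R A + q *\<^sub>R B + r *\<^sub>R C" using Vform unfolding p_def q_def r_def .
    have tri: "norm (x + y + z) \<le> norm x + norm y + norm z" for x y z :: "'z::real_normed_vector"
      by (meson add_right_mono norm_triangle_ineq order_trans)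
    have e1: "exp t \<ge> 1" using t by simp
    have ee: "1 \<le> exp t * exp t" using mult_mono[OF e1 e1] by simp
    have pp: "0 \<le> p" "p \<le> exp (-t)"
      unfolding p_def using e1 ee by (auto simp: exp_minus field_simps)
    have qq: "0 \<le> q" "q \<le> exp (-t)"
      unfolding q_def using e1 ee by (auto simp: exp_minus field_simps)
    have rr: "0 \<le> r" "r \<le> exp (-t)"
      unfolding r_def using e1 ee by (auto simp: exp_minus field_simps)
    have "norm V \<le> p * norm A + q * norm B + r * norm C"
      using tri[of "p *\<^sub>R A" "q *\<^sub>R B" "r *\<^sub>R C"] pp(1) qq(1) rr(1) unfolding Veq by simp
    also have "\<dots> \<le> exp (-t) * norm A + exp (-t) * norm B + exp (-t) * norm C"
      by (intro add_mono mult_right_mono pp qq rr norm_ge_zero)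
    finally show ?thesis unfolding S_def by (simp add: algebra_simps)
  qed
  have "norm V = 0"
  proof (rule ccontr)
    assume "norm V \<noteq> 0"
    then have nv: "norm V > 0" by simp
    define t where "t = S / norm V"
    have t0: "t \<ge> 0" unfolding t_def using S0 nv by simp
    have "exp (-t) \<le> 1 / (1 + t)"
      unfolding exp_minus inverse_eq_divide
      by (rule divide_left_mono) (use exp_ge_add_one_self[of t] t0 in auto)
    then have "exp (-t) * S \<le> (1 / (1 + t)) * S" using S0 by (rule mult_right_mono)
    then have "norm V \<le> S / (1 + t)" using bound[OF t0] by simp
    also have "S / (1 + t) = S * norm V / (norm V + S)"
      unfolding t_def using nv S0 by (simp add: field_simps)
    also have "\<dots> < norm V"
    proof -
      have "S * norm V < norm V * (norm V + S)"
        using nv by (simp add: algebra_simps)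
      moreover have "norm V + S > 0" using nv S0 by linarith
      ultimately show ?thesis by (simp add: divide_less_eq)
    qed
    finally show False by simp
  qed
  then have "V = 0" by (simp only: norm_eq_zero)
  then show ?thesis unfolding V_def by (rule right_minus_eq[THEN iffD1])
qed


lemma eigD2: "X \<in> ad_eig a lam \<Longrightarrow> a t o\<^sub>L (X o\<^sub>L (a (-t) o\<^sub>L Z)) = exp (lam * t) *\<^sub>R (X o\<^sub>L Z)"
  using arg_cong[OF eigD[of X a lam t], of "\<lambda>W. W o\<^sub>L Z"] by simp

lemma G_O: "g \<in> G_SOn1 \<Longrightarrow> g \<in> O_n1"
  unfolding G_SOn1_def using connected_component_subset by blast

lemma N_mult:
  assumes tor: "split_torus a" and u: "u \<in> N_grp a" and v: "v \<in> N_grp a"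
  shows "u o\<^sub>L v \<in> N_grp a"
proof -
  obtain X Y where X: "X \<in> ad_eig a 1" "u = mexp X" and Y: "Y \<in> ad_eig a 1" "v = mexp Y"
    using u v unfolding N_grp_def by blast
  have "u o\<^sub>L v = mexp (X + Y)"
    using mexp_add_commuting[OF g1_comm[OF tor X(1) Y(1)]] X Y by simp
  then show ?thesis unfolding N_grp_def using eig_add[OF X(1) Y(1)] by blast
qed

lemma N_inv:
  assumes u: "u \<in> N_grp a"
  shows "\<exists>u'\<in>N_grp a. u o\<^sub>L u' = id_blinfun \<and> u' o\<^sub>L u = id_blinfun"
proof -
  obtain X where X: "X \<in> ad_eig a 1" "u = mexp X"
    using u unfolding N_grp_def by blast
  have c: "X o\<^sub>L (- X) = (- X) o\<^sub>L X" by (simp add: comp_minus_left comp_minus_right)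
  have 1: "u o\<^sub>L mexp (- X) = id_blinfun"
    using mexp_add_commuting[OF c] X(2) by (simp add: mexp_zero)
  have 2: "mexp (- X) o\<^sub>L u = id_blinfun"
    using mexp_add_commuting[OF c[symmetric]] X(2) by (simp add: mexp_zero)
  show ?thesis using 1 2 eig_minus[OF X(1)] unfolding N_grp_def by blast
qed

lemma M_D:
  assumes "m \<in> M_grp a K"
  shows "m \<in> G_SOn1" "m o\<^sub>L a t = a t o\<^sub>L m" "m \<in> K"
  using assms unfolding M_grp_def by blast+

lemma N_conj:
  assumes tor: "split_torus a" and m: "m \<in> M_grp a K" and y: "y \<in> G_SOn1"
    and my: "m o\<^sub>L y = id_blinfun" and ym: "y o\<^sub>L m = id_blinfun" and u: "u \<in> N_grp a"
  shows "y o\<^sub>L u o\<^sub>L m \<in> N_grp a"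
proof -
  obtain X where X: "X \<in> ad_eig a 1" "u = mexp X"
    using u unfolding N_grp_def by blast
  have ma: "m o\<^sub>L a t = a t o\<^sub>L m" for t using M_D(2)[OF m] .
  have ya0: "y o\<^sub>L a t = a t o\<^sub>L y" for t
  proof -
    have "y o\<^sub>L a t = y o\<^sub>L a t o\<^sub>L (m o\<^sub>L y)" using my by simp
    also have "\<dots> = y o\<^sub>L (m o\<^sub>L a t) o\<^sub>L y" by (simp add: ma)
    also have "\<dots> = a t o\<^sub>L y" using ym by (simp flip: comp_assoc)
    finally show ?thesis .
  qed
  have ya: "a t o\<^sub>L (y o\<^sub>L Z) = y o\<^sub>L (a t o\<^sub>L Z)" for t Z
    using arg_cong[OF ya0[of t], of "\<lambda>W. W o\<^sub>L Z"] by simp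
  have ma2: "m o\<^sub>L (a t o\<^sub>L Z) = a t o\<^sub>L (m o\<^sub>L Z)" for t Z
    using arg_cong[OF ma[of t], of "\<lambda>W. W o\<^sub>L Z"] by simp
  have "y o\<^sub>L X o\<^sub>L m \<in> ad_eig a 1"
  proof (rule eigI)
    show "y o\<^sub>L X o\<^sub>L m \<in> so_n1"
      by (rule so_conj[OF eig_so[OF X(1)] G_O[OF y] G_O[OF M_D(1)[OF m]] my])
    fix t
    have "a t o\<^sub>L (y o\<^sub>L X o\<^sub>L m o\<^sub>L a (- t)) = y o\<^sub>L (a t o\<^sub>L (X o\<^sub>L (a (-t) o\<^sub>L m)))"
      by (simp add: ya ma)
    also have "\<dots> = exp (1 * t) *\<^sub>R (y o\<^sub>L X o\<^sub>L m)"
      by (simp add: eigD2[OF X(1)])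
    finally show "a t o\<^sub>L (y o\<^sub>L X o\<^sub>L m o\<^sub>L a (- t)) = exp (1 * t) *\<^sub>R (y o\<^sub>L X o\<^sub>L m)" .
  qed
  moreover have "y o\<^sub>L u o\<^sub>L m = mexp (y o\<^sub>L X o\<^sub>L m)"
    using mexp_conj[OF my ym] X(2) by simp
  ultimately show ?thesis unfolding N_grp_def by blast
qed



lemma sg_D:
  assumes "subgroup_of H Grp"
  shows "H \<subseteq> Grp" "id_blinfun \<in> H" "\<And>x y. x \<in> H \<Longrightarrow> y \<in> H \<Longrightarrow> x o\<^sub>L y \<in> H"
    "\<And>x. x \<in> H \<Longrightarrow> \<exists>y\<in>H. x o\<^sub>L y = id_blinfun \<and> y o\<^sub>L x = id_blinfun"
  using assms unfolding subgroup_of_def by blast+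

lemma conj_id[simp]: "conj_set id_blinfun H = H"
  unfolding conj_set_def by simp

lemma cocompactD:
  assumes "cocompact_in H L"
  obtains C where "compact C" "C \<subseteq> L" "\<And>h. h \<in> L \<Longrightarrow> \<exists>g\<in>H. \<exists>c\<in>C. h = g o\<^sub>L c"
  using assms unfolding cocompact_in_def by blast

theorem lemma3p1:
  fixes a :: "real \<Rightarrow> 'n::finite lmap"
    and K Gam Xi eta0 :: "'n lmap set"
    and sigma :: "'n lmap"
    and s0 :: real
  assumes n2: "CARD('n) \<ge> 2"
    and torus: "split_torus a"
    and Kmax: "max_compact_subgroup K"
    and sigK: "sigma \<in> K"
    and sig2: "sigma o\<^sub>L sigma = id_blinfun"
    and siga: "\<forall>t. sigma o\<^sub>L a t o\<^sub>L sigma = a (- t)"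
    and Gam_sub: "subgroup_of Gam G_SOn1"
    and Gam_disc: "discrete_set Gam"
    and Gam_covol: "finite_covolume Gam"
    and Gam_noncpt: "\<not> compact_quotient Gam"
    and s0: "s0 > 0"
    and eta0: "compact eta0" "eta0 \<subseteq> N_grp a"
    and Xi: "finite Xi" "id_blinfun \<in> Xi" "Xi \<subseteq> G_SOn1"
    and cond_i: "G_SOn1 = setmul Gam (setmul Xi (Omega a K eta0 s0))"
    and cond_ii: "\<forall>xi\<in>Xi. cocompact_in (Gam \<inter> conj_set xi (N_grp a)) (conj_set xi (N_grp a))"
    and cond_iii: "\<forall>eta. compact eta \<and> eta \<subseteq> N_grp a \<longrightarrow>
        finite {g \<in> Gam. setmul {g} (setmul Xi (Omega a K eta s0)) \<inter> Omega a K eta s0 \<noteq> {}}"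
    and cond_iv: "\<forall>eta. compact eta \<and> eta0 \<subseteq> eta \<and> eta \<subseteq> N_grp a \<longrightarrow>
        (\<exists>s1>s0. \<forall>g\<in>Gam. \<forall>xi1\<in>Xi. \<forall>xi2\<in>Xi.
           setmul {g o\<^sub>L xi1} (Omega a K eta s0) \<inter> setmul {xi2} (Omega a K eta s1) \<noteq> {} \<longrightarrow>
           xi1 = xi2 \<and> g \<in> conj_set xi1 (setmul (N_grp a) (M_grp a K)))"
  shows "\<exists>c>0. \<forall>g\<in>Gam. \<forall>xi\<in>Xi. g o\<^sub>L xi \<notin> P_grp a K \<longrightarrow>
           (\<forall>u1 u2 m r. u1 \<in> N_grp a \<and> u2 \<in> N_grp a \<and> m \<in> M_grp a K \<and>
              g o\<^sub>L xi = u1 o\<^sub>L sigma o\<^sub>L m o\<^sub>L a r o\<^sub>L u2 \<longrightarrow> exp r \<ge> c)"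
proof -
  let ?N = "N_grp a"
  have Ksg: "subgroup_of K G_SOn1" using Kmax unfolding max_compact_subgroup_def by blast
  obtain C0 where C0: "compact C0" "C0 \<subseteq> ?N" "\<And>h. h \<in> ?N \<Longrightarrow> \<exists>g\<in>Gam \<inter> ?N. \<exists>c\<in>C0. h = g o\<^sub>L c"
    using cond_ii Xi(2) by (auto elim!: cocompactD)
  have "\<forall>xi\<in>Xi. \<exists>p. compact (fst p) \<and> fst p \<subseteq> conj_set xi ?N \<and>
     (\<forall>h\<in>conj_set xi ?N. \<exists>g\<in>Gam \<inter> conj_set xi ?N. \<exists>c\<in>fst p. h = g o\<^sub>L c) \<and> snd p o\<^sub>L xi = id_blinfun"
  proof
    fix xi assume xi: "xi \<in> Xi"
    obtain C where C: "compact C" "C \<subseteq> conj_set xi ?N" "\<And>h. h \<in> conj_set xi ?N \<Longrightarrow> \<exists>g\<in>Gam \<inter> conj_set xi ?N. \<exists>c\<in>C. h = g o\<^sub>L c"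
      using cond_ii xi by (auto elim!: cocompactD)
    obtain L where L: "L o\<^sub>L xi = id_blinfun"
      using O_left_inv[OF G_O] xi Xi(3) by blast
    show "\<exists>p. compact (fst p) \<and> fst p \<subseteq> conj_set xi ?N \<and>
     (\<forall>h\<in>conj_set xi ?N. \<exists>g\<in>Gam \<inter> conj_set xi ?N. \<exists>c\<in>fst p. h = g o\<^sub>L c) \<and> snd p o\<^sub>L xi = id_blinfun"
      by (rule exI[of _ "(C, L)"]) (use C L in auto)
  qed
  then obtain f where f: "\<And>xi. xi \<in> Xi \<Longrightarrow> compact (fst (f xi)) \<and> fst (f xi) \<subseteq> conj_set xi ?N \<and>
     (\<forall>h\<in>conj_set xi ?N. \<exists>g\<in>Gam \<inter> conj_set xi ?N. \<exists>c\<in>fst (f xi). h = g o\<^sub>L c) \<and> snd (f xi) o\<^sub>L xi = id_blinfun"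
    by (metis (no_types, lifting) bchoice)
  define Cx where "Cx xi = fst (f xi)" for xi
  define Lx where "Lx xi = snd (f xi)" for xi
  have Cx: "\<And>xi. xi \<in> Xi \<Longrightarrow> compact (Cx xi)" "\<And>xi. xi \<in> Xi \<Longrightarrow> Cx xi \<subseteq> conj_set xi ?N"
    "\<And>xi h. xi \<in> Xi \<Longrightarrow> h \<in> conj_set xi ?N \<Longrightarrow> \<exists>g\<in>Gam \<inter> conj_set xi ?N. \<exists>c\<in>Cx xi. h = g o\<^sub>L c"
    and Lx: "\<And>xi. xi \<in> Xi \<Longrightarrow> Lx xi o\<^sub>L xi = id_blinfun"
    using f unfolding Cx_def Lx_def by blast+
  define eta where "eta = eta0 \<union> C0 \<union> (\<Union>xi\<in>Xi. (\<lambda>c. Lx xi o\<^sub>L c o\<^sub>L xi) ` Cx xi)"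
  have eta_cpt: "compact eta"
    unfolding eta_def
  proof (intro compact_Un compact_UN eta0(1) C0(1) Xi(1))
    fix xi assume "xi \<in> Xi"
    show "compact ((\<lambda>c. Lx xi o\<^sub>L c o\<^sub>L xi) ` Cx xi)"
      by (rule compact_continuous_image[OF _ Cx(1)[OF \<open>xi \<in> Xi\<close>]]) (intro continuous_intros)
  qed
  have Lxc: "Lx xi o\<^sub>L c o\<^sub>L xi = w" if "xi \<in> Xi" "c o\<^sub>L xi = xi o\<^sub>L w" for xi c w
  proof -
    have "Lx xi o\<^sub>L c o\<^sub>L xi = Lx xi o\<^sub>L (c o\<^sub>L xi)" by simp
    also have "\<dots> = (Lx xi o\<^sub>L xi) o\<^sub>L w" using that(2) by simp
    finally show ?thesis using Lx[OF that(1)] by simp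
  qed
  have eta_N: "eta \<subseteq> ?N"
  proof -
    have "(\<lambda>c. Lx xi o\<^sub>L c o\<^sub>L xi) ` Cx xi \<subseteq> ?N" if xi: "xi \<in> Xi" for xi
    proof
      fix x assume "x \<in> (\<lambda>c. Lx xi o\<^sub>L c o\<^sub>L xi) ` Cx xi"
      then obtain c where c: "c \<in> Cx xi" "x = Lx xi o\<^sub>L c o\<^sub>L xi" by blast
      then have "c \<in> conj_set xi ?N" using Cx(2)[OF xi] by blast
      then obtain w where w: "w \<in> ?N" "c o\<^sub>L xi = xi o\<^sub>L w" unfolding conj_set_def by blast
      show "x \<in> ?N" using Lxc[OF xi w(2)] c(2) w(1) by simp
    qed
    then show ?thesis unfolding eta_def using eta0(2) C0(2) by blast
  qed
  have eta0_sub: "eta0 \<subseteq> eta" unfolding eta_def by blast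
  obtain s1 where s1: "s1 > s0" and
    s1P: "\<And>g xi1 xi2. g \<in> Gam \<Longrightarrow> xi1 \<in> Xi \<Longrightarrow> xi2 \<in> Xi \<Longrightarrow>
           setmul {g o\<^sub>L xi1} (Omega a K eta s0) \<inter> setmul {xi2} (Omega a K eta s1) \<noteq> {} \<Longrightarrow>
           xi1 = xi2 \<and> g \<in> conj_set xi1 (setmul (N_grp a) (M_grp a K))"
  proof -
    from cond_iv[rule_format, OF conjI[OF eta_cpt conjI[OF eta0_sub eta_N]]]
    obtain s1 where "s1 > s0" and S: "\<forall>g\<in>Gam. \<forall>xi1\<in>Xi. \<forall>xi2\<in>Xi.
           setmul {g o\<^sub>L xi1} (Omega a K eta s0) \<inter> setmul {xi2} (Omega a K eta s1) \<noteq> {} \<longrightarrow>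
           xi1 = xi2 \<and> g \<in> conj_set xi1 (setmul (N_grp a) (M_grp a K))"
      by (elim exE conjE)
    show ?thesis
    proof (rule that[OF \<open>s1 > s0\<close>])
      fix g xi1 xi2 assume "g \<in> Gam" "xi1 \<in> Xi" "xi2 \<in> Xi"
        "setmul {g o\<^sub>L xi1} (Omega a K eta s0) \<inter> setmul {xi2} (Omega a K eta s1) \<noteq> {}"
      then show "xi1 = xi2 \<and> g \<in> conj_set xi1 (setmul (N_grp a) (M_grp a K))"
        using S by blast
    qed
  qed
  have sig_a: "sigma o\<^sub>L a t = a (-t) o\<^sub>L sigma" for t
  proof -
    have "sigma o\<^sub>L a t = sigma o\<^sub>L a t o\<^sub>L (sigma o\<^sub>L sigma)" using sig2 by simp
    also have "\<dots> = (sigma o\<^sub>L a t o\<^sub>L sigma) o\<^sub>L sigma" by simp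
    also have "\<dots> = a (-t) o\<^sub>L sigma" using siga by simp
    finally show ?thesis .
  qed
  show ?thesis
  proof (intro exI[of _ "exp (-(s0 + s1))"] conjI ballI impI allI)
    show "exp (-(s0 + s1)) > 0" by simp
    fix g xi u1 u2 m r
    assume g: "g \<in> Gam" and xi: "xi \<in> Xi" and notP: "g o\<^sub>L xi \<notin> P_grp a K"
      and H: "u1 \<in> ?N \<and> u2 \<in> ?N \<and> m \<in> M_grp a K \<and> g o\<^sub>L xi = u1 o\<^sub>L sigma o\<^sub>L m o\<^sub>L a r o\<^sub>L u2"
    then have u1: "u1 \<in> ?N" and u2: "u2 \<in> ?N" and m: "m \<in> M_grp a K"
      and geq: "g o\<^sub>L xi = u1 o\<^sub>L sigma o\<^sub>L m o\<^sub>L a r o\<^sub>L u2" by auto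
    show "exp r \<ge> exp (-(s0 + s1))"
    proof (rule ccontr)
      assume "\<not> exp r \<ge> exp (-(s0 + s1))"
      then have rlt: "r < -(s0 + s1)" by simp
      obtain u2' where u2': "u2' \<in> ?N" "u2 o\<^sub>L u2' = id_blinfun" using N_inv[OF u2] by blast
      define h where "h = xi o\<^sub>L u2' o\<^sub>L Lx xi"
      have hxi: "h o\<^sub>L xi = xi o\<^sub>L u2'"
      proof -
        have "h o\<^sub>L xi = xi o\<^sub>L u2' o\<^sub>L (Lx xi o\<^sub>L xi)" unfolding h_def by simp
        then show ?thesis using Lx[OF xi] by simp
      qed
      then have "h \<in> conj_set xi ?N" unfolding conj_set_def using u2'(1) by blast
      then obtain g1 c1 where g1: "g1 \<in> Gam" "g1 \<in> conj_set xi ?N" and c1: "c1 \<in> Cx xi" and hg: "h = g1 o\<^sub>L c1"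
        using Cx(3)[OF xi] by blast
      have "c1 \<in> conj_set xi ?N" using Cx(2)[OF xi] c1 by blast
      then obtain w where w: "w \<in> ?N" "c1 o\<^sub>L xi = xi o\<^sub>L w" unfolding conj_set_def by blast
      have w_eta: "w \<in> eta"
      proof -
        have "w = Lx xi o\<^sub>L c1 o\<^sub>L xi" using Lxc[OF xi w(2)] by simp
        then show ?thesis unfolding eta_def using xi c1 by blast
      qed
      obtain g2 c0 where g2: "g2 \<in> Gam" "g2 \<in> ?N" and c0: "c0 \<in> C0" and u1eq: "u1 = g2 o\<^sub>L c0"
        using C0(3)[OF u1] by blast
      obtain g2' where g2': "g2' \<in> Gam" "g2 o\<^sub>L g2' = id_blinfun" "g2' o\<^sub>L g2 = id_blinfun"
        using sg_D(4)[OF Gam_sub g2(1)] by blast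
      define g'' where "g'' = g2' o\<^sub>L g o\<^sub>L g1"
      have g''G: "g'' \<in> Gam" unfolding g''_def using sg_D(3)[OF Gam_sub] g2'(1) g g1(1) by blast
      have key: "g'' o\<^sub>L xi o\<^sub>L w = c0 o\<^sub>L sigma o\<^sub>L m o\<^sub>L a r"
      proof -
        have "g'' o\<^sub>L xi o\<^sub>L w = g2' o\<^sub>L g o\<^sub>L g1 o\<^sub>L (c1 o\<^sub>L xi)" unfolding g''_def using w(2) by simp
        also have "\<dots> = g2' o\<^sub>L g o\<^sub>L (h o\<^sub>L xi)" using hg by simp
        also have "\<dots> = g2' o\<^sub>L (g o\<^sub>L xi) o\<^sub>L u2'" using hxi by simp
        also have "\<dots> = g2' o\<^sub>L u1 o\<^sub>L sigma o\<^sub>L m o\<^sub>L a r o\<^sub>L (u2 o\<^sub>L u2')" using geq by simp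
        also have "\<dots> = (g2' o\<^sub>L g2) o\<^sub>L c0 o\<^sub>L sigma o\<^sub>L m o\<^sub>L a r" using u2'(2) u1eq by simp
        also have "\<dots> = c0 o\<^sub>L sigma o\<^sub>L m o\<^sub>L a r" using g2'(3) by simp
        finally show ?thesis .
      qed
      have sm: "sigma o\<^sub>L m \<in> K" using sg_D(3)[OF Ksg sigK M_D(3)[OF m]] .
      define x where "x = c0 o\<^sub>L a (-(r + s0)) o\<^sub>L (sigma o\<^sub>L m)"
      have x1: "x = (g'' o\<^sub>L xi) o\<^sub>L (w o\<^sub>L a s0 o\<^sub>L id_blinfun)"
      proof -
        have "(g'' o\<^sub>L xi) o\<^sub>L (w o\<^sub>L a s0 o\<^sub>L id_blinfun) = (g'' o\<^sub>L xi o\<^sub>L w) o\<^sub>L a s0" by simp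
        also have "\<dots> = c0 o\<^sub>L sigma o\<^sub>L (m o\<^sub>L (a r o\<^sub>L a s0))" using key by simp
        also have "\<dots> = c0 o\<^sub>L sigma o\<^sub>L (m o\<^sub>L a (r + s0))" using st_D(2)[OF torus, of r s0] by simp
        also have "\<dots> = c0 o\<^sub>L (sigma o\<^sub>L a (r + s0)) o\<^sub>L m" using M_D(2)[OF m, of "r + s0"] by simp
        also have "\<dots> = x" unfolding x_def sig_a by simp
        finally show ?thesis by simp
      qed
      have xA: "x \<in> setmul {g'' o\<^sub>L xi} (Omega a K eta s0)"
        unfolding setmul_def Omega_def using x1 w_eta sg_D(2)[OF Ksg] by blast
      have c0eta: "c0 \<in> eta" unfolding eta_def using c0 by blast
      have "s1 \<le> -(r + s0)" using rlt by simp
      then have xB: "x \<in> setmul {id_blinfun} (Omega a K eta s1)"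
        unfolding setmul_def Omega_def x_def using c0eta sm by fastforce
      from s1P[OF g''G xi Xi(2)] xA xB
      have xi1: "xi = id_blinfun" and g''NM: "g'' \<in> conj_set xi (setmul ?N (M_grp a K))" by blast+
      from g''NM xi1 obtain n' m' where n': "n' \<in> ?N" and m': "m' \<in> M_grp a K" and g''eq: "g'' = n' o\<^sub>L m'"
        unfolding conj_set_def setmul_def by auto
      have g1N: "g1 \<in> ?N" using g1(2) xi1 by simp
      obtain g1'' where g1'': "g1'' \<in> ?N" "g1 o\<^sub>L g1'' = id_blinfun" using N_inv[OF g1N] by blast
      have geq2: "g = g2 o\<^sub>L n' o\<^sub>L m' o\<^sub>L g1''"
      proof -
        have "g2 o\<^sub>L g'' o\<^sub>L g1'' = (g2 o\<^sub>L g2') o\<^sub>L g o\<^sub>L (g1 o\<^sub>L g1'')" unfolding g''_def by simp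
        then have "g2 o\<^sub>L g'' o\<^sub>L g1'' = g" using g2'(2) g1''(2) by simp
        then show ?thesis using g''eq by simp
      qed
      obtain y where y: "y \<in> K" "m' o\<^sub>L y = id_blinfun" "y o\<^sub>L m' = id_blinfun"
        using sg_D(4)[OF Ksg M_D(3)[OF m']] by blast
      have yG: "y \<in> G_SOn1" using sg_D(1)[OF Ksg] y(1) by blast
      define U where "U = y o\<^sub>L (g2 o\<^sub>L n') o\<^sub>L m' o\<^sub>L g1''"
      have UN: "U \<in> ?N" unfolding U_def
        by (intro N_mult[OF torus] N_conj[OF torus m' yG y(2) y(3)] g1'' g2(2) n')
      have "g o\<^sub>L xi = m' o\<^sub>L a 0 o\<^sub>L U"
      proof -
        have "m' o\<^sub>L a 0 o\<^sub>L U = (m' o\<^sub>L y) o\<^sub>L g2 o\<^sub>L n' o\<^sub>L m' o\<^sub>L g1''"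
          unfolding U_def using st_D(1)[OF torus] by simp
        then show ?thesis using y(2) geq2 xi1 by simp
      qed
      then have "g o\<^sub>L xi \<in> P_grp a K" unfolding P_grp_def using m' UN by blast
      then show False using notP by simp
    qed
  qed
qed

end
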